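(* Every cubic graph of path-width at most 4 contains a subgraph isomorphic to one of the following: the triangle, $K_{2,3}$, the domino, the twin-house, or the claw-square.
   Context: All graphs are finite and simple; cubic means 3-regular. The domino is the $2\times 3$ grid graph (vertices $a_1,a_2,a_3,b_1,b_2,b_3$, edges $a_1a_2,a_2a_3,b_1b_2,b_2b_3,a_1b_1,a_2b_2,a_3b_3$). The twin-house is the graph on vertices $p_1,\dots,p_6$ with edges $p_1p_2,p_1p_5,p_2p_6,p_5p_3,p_5p_4,p_6p_3,p_6p_4$. The claw-square is the graph on vertices $a_1,a_2,a_3,a_4,b_1,b_2,b_3,c$ with edges $a_1a_2,a_2a_3,a_3a_4,a_4a_1$, $cb_1,cb_2,cb_3$, $b_1a_1,b_2a_2,b_3a_3$. *)

theory Defs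
  imports Main
begin

definition simple_graph :: "'a set \<Rightarrow> ('a \<Rightarrow> 'a \<Rightarrow> bool) \<Rightarrow> bool" where
  "simple_graph V E \<longleftrightarrow> finite V \<and> (\<forall>u v. E u v \<longrightarrow> u \<in> V \<and> v \<in> V)
     \<and> (\<forall>u v. E u v \<longrightarrow> E v u) \<and> (\<forall>u. \<not> E u u)"

definition cubic :: "'a set \<Rightarrow> ('a \<Rightarrow> 'a \<Rightarrow> bool) \<Rightarrow> bool" where
  "cubic V E \<longleftrightarrow> (\<forall>v\<in>V. card {u \<in> V. E v u} = 3)"

definition path_decomposition :: "'a set \<Rightarrow> ('a \<Rightarrow> 'a \<Rightarrow> bool) \<Rightarrow> 'a set list \<Rightarrow> bool" where
  "path_decomposition V E B \<longleftrightarrow>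
     (\<forall>X\<in>set B. X \<subseteq> V)
   \<and> (\<forall>v\<in>V. \<exists>X\<in>set B. v \<in> X)
   \<and> (\<forall>u v. E u v \<longrightarrow> (\<exists>X\<in>set B. u \<in> X \<and> v \<in> X))
   \<and> (\<forall>i j k. i \<le> j \<and> j \<le> k \<and> k < length B \<longrightarrow> B ! i \<inter> B ! k \<subseteq> B ! j)"

definition pathwidth :: "'a set \<Rightarrow> ('a \<Rightarrow> 'a \<Rightarrow> bool) \<Rightarrow> nat" where
  "pathwidth V E = (LEAST k. \<exists>B. path_decomposition V E B \<and> (\<forall>X\<in>set B. card X \<le> k + 1))"

definition has_subgraph_iso :: "'a set \<Rightarrow> ('a \<Rightarrow> 'a \<Rightarrow> bool) \<Rightarrow> 'b set \<Rightarrow> ('b \<Rightarrow> 'b \<Rightarrow> bool) \<Rightarrow> bool" where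
  "has_subgraph_iso V E HV HE \<longleftrightarrow>
     (\<exists>f. inj_on f HV \<and> f ` HV \<subseteq> V \<and> (\<forall>x\<in>HV. \<forall>y\<in>HV. HE x y \<longrightarrow> E (f x) (f y)))"

definition edges_of :: "(nat \<times> nat) list \<Rightarrow> nat \<Rightarrow> nat \<Rightarrow> bool" where
  "edges_of L x y \<longleftrightarrow> (x, y) \<in> set L \<or> (y, x) \<in> set L"

definition triangle_V :: "nat set" where "triangle_V = {0,1,2}"
definition triangle_E :: "nat \<Rightarrow> nat \<Rightarrow> bool" where
  "triangle_E = edges_of [(0,1),(1,2),(2,0)]"

definition K23_V :: "nat set" where "K23_V = {0,1,2,3,4}"
definition K23_E :: "nat \<Rightarrow> nat \<Rightarrow> bool" where
  "K23_E = edges_of [(0,2),(0,3),(0,4),(1,2),(1,3),(1,4)]"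

text \<open>Domino: a1,a2,a3 = 1,2,3; b1,b2,b3 = 4,5,6.\<close>
definition domino_V :: "nat set" where "domino_V = {1,2,3,4,5,6}"
definition domino_E :: "nat \<Rightarrow> nat \<Rightarrow> bool" where
  "domino_E = edges_of [(1,2),(2,3),(4,5),(5,6),(1,4),(2,5),(3,6)]"

text \<open>Twin-house: p1..p6 = 1..6.\<close>
definition twinhouse_V :: "nat set" where "twinhouse_V = {1,2,3,4,5,6}"
definition twinhouse_E :: "nat \<Rightarrow> nat \<Rightarrow> bool" where
  "twinhouse_E = edges_of [(1,2),(1,5),(2,6),(5,3),(5,4),(6,3),(6,4)]"

text \<open>Claw-square: a1..a4 = 1..4, b1,b2,b3 = 5,6,7, c = 8.\<close>
definition clawsquare_V :: "nat set" where "clawsquare_V = {1,2,3,4,5,6,7,8}"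
definition clawsquare_E :: "nat \<Rightarrow> nat \<Rightarrow> bool" where
  "clawsquare_E = edges_of [(1,2),(2,3),(3,4),(4,1),(8,5),(8,6),(8,7),(5,1),(6,2),(7,3)]"

end

theory Submission
  imports Defs
begin

definition rel :: "(nat \<times> nat) list \<Rightarrow> nat \<Rightarrow> nat \<Rightarrow> bool" where
  "rel es i j \<longleftrightarrow> (i, j) \<in> set es \<or> (j, i) \<in> set es"

definition dg :: "(nat \<Rightarrow> nat \<Rightarrow> bool) \<Rightarrow> nat \<Rightarrow> nat \<Rightarrow> nat" where
  "dg A p i = card {j. j < p \<and> A i j}"

definition bdc :: "(nat \<Rightarrow> nat \<Rightarrow> bool) \<Rightarrow> nat \<Rightarrow> nat" where
  "bdc A p = card {i. i < p \<and> dg A p i < 3}"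

definition Conds :: "(nat \<Rightarrow> nat \<Rightarrow> bool) \<Rightarrow> nat \<Rightarrow> bool" where
  "Conds A m \<longleftrightarrow> (\<forall>i<m. \<forall>j<m. A i j = A j i) \<and> (\<forall>i<m. \<not> A i i)
     \<and> (\<forall>i<m. dg A m i \<le> 3) \<and> (m < 9 \<longrightarrow> (\<forall>i<m. dg A m i = 3)) \<and> 1 \<le> m"

definition emb :: "'b set \<Rightarrow> ('b \<Rightarrow> 'b \<Rightarrow> bool) \<Rightarrow> (nat \<Rightarrow> nat \<Rightarrow> bool) \<Rightarrow> nat \<Rightarrow> bool" where
  "emb HV HE A m \<longleftrightarrow> (\<exists>g. inj_on g HV \<and> g ` HV \<subseteq> {..<m} \<and> (\<forall>x\<in>HV. \<forall>y\<in>HV. HE x y \<longrightarrow> A (g x) (g y)))"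

definition HasF :: "(nat \<Rightarrow> nat \<Rightarrow> bool) \<Rightarrow> nat \<Rightarrow> bool" where
  "HasF A m \<longleftrightarrow> emb triangle_V triangle_E A m \<or> emb K23_V K23_E A m \<or> emb domino_V domino_E A m
     \<or> emb twinhouse_V twinhouse_E A m \<or> emb clawsquare_V clawsquare_E A m"

definition Good :: "nat \<Rightarrow> (nat \<Rightarrow> nat \<Rightarrow> bool) \<Rightarrow> bool" where
  "Good k R \<longleftrightarrow> (\<forall>A m. k \<le> m \<longrightarrow> Conds A m \<longrightarrow> (\<forall>p. k \<le> p \<longrightarrow> p \<le> m \<longrightarrow> bdc A p \<le> 4)
      \<longrightarrow> (\<forall>i<k. \<forall>j<k. A i j = R i j) \<longrightarrow> HasF A m)"

definition dgl :: "(nat \<times> nat) list \<Rightarrow> nat \<Rightarrow> nat \<Rightarrow> nat" where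
  "dgl es k i = length (filter (\<lambda>j. rel es i j) [0..<k])"

definition bdlist :: "(nat \<times> nat) list \<Rightarrow> nat \<Rightarrow> nat list" where
  "bdlist es k = filter (\<lambda>i. dgl es k i < 3) [0..<k]"

definition cands :: "(nat \<times> nat) list \<Rightarrow> nat \<Rightarrow> nat list list" where
  "cands es k = filter (\<lambda>s. length s \<le> 3) (subseqs (bdlist es k))"

definition fgraphs :: "(nat list \<times> (nat \<times> nat) list) list" where
  "fgraphs = [([0,1,2], [(0,1),(1,2),(2,0)]),
              ([0,1,2,3,4], [(0,2),(0,3),(0,4),(1,2),(1,3),(1,4)]),
              ([1,2,3,4,5,6], [(1,2),(2,3),(4,5),(5,6),(1,4),(2,5),(3,6)]),
              ([1,2,3,4,5,6], [(1,2),(1,5),(2,6),(5,3),(5,4),(6,3),(6,4)]),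
              ([1,2,3,4,5,6,7,8], [(1,2),(2,3),(3,4),(4,1),(8,5),(8,6),(8,7),(5,1),(6,2),(7,3)])]"

definition fcert :: "nat \<Rightarrow> nat list \<Rightarrow> (nat \<times> nat) list \<Rightarrow> nat \<Rightarrow> bool" where
  "fcert h fl es k \<longleftrightarrow> h < 5 \<and> (let (hv, he) = fgraphs ! h in
     (\<forall>x\<in>set hv. x < length fl \<and> fl ! x < k) \<and> distinct (map (\<lambda>x. fl ! x) hv)
     \<and> (\<forall>(a,b)\<in>set he. rel es (fl ! a) (fl ! b)))"

definition isoc :: "nat list \<Rightarrow> nat list \<Rightarrow> (nat \<times> nat) list \<Rightarrow> (nat \<times> nat) list \<Rightarrow> nat \<Rightarrow> bool" where
  "isoc pi rho es ke k \<longleftrightarrow> length pi = k \<and> length rho = k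
     \<and> list_all (\<lambda>i. pi ! i < k \<and> rho ! i < k \<and> rho ! (pi ! i) = i \<and> pi ! (rho ! i) = i) [0..<k]
     \<and> list_all (\<lambda>i. list_all (\<lambda>j. rel es i j = rel ke (pi ! i) (pi ! j)) [0..<k]) [0..<k]"

datatype cert = Bd | Fb nat "nat list" | Rf nat "nat list" "nat list"

fun check_child :: "nat \<Rightarrow> (nat \<times> nat) list \<Rightarrow> (nat \<times> (nat \<times> nat) list) list \<Rightarrow> cert \<Rightarrow> bool" where
  "check_child k es known Bd = (5 \<le> length (bdlist es k))"
| "check_child k es known (Fb h fl) = fcert h fl es k"
| "check_child k es known (Rf idx pi rho) = (idx < length known \<and> fst (known ! idx) = k
      \<and> isoc pi rho es (snd (known ! idx)) k)"

definition check_state :: "nat \<Rightarrow> (nat \<times> nat) list \<Rightarrow> (nat \<times> (nat \<times> nat) list) list \<Rightarrow> cert list \<Rightarrow> bool" where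
  "check_state k es known cs \<longleftrightarrow> k < 9 \<and> (k = 0 \<or> bdlist es k \<noteq> [])
     \<and> (\<forall>(a,b)\<in>set es. a < k \<and> b < k)
     \<and> list_all2 (\<lambda>s c. check_child (Suc k) (es @ map (Pair k) s) known c) (cands es k) cs"


lemma len_filter_card: "length (filter P [0..<k]) = card {j. j < k \<and> P j}"
proof -
  have "card (set (filter P [0..<k])) = length (filter P [0..<k])"
    by (rule distinct_card) simp
  moreover have "set (filter P [0..<k]) = {j. j < k \<and> P j}" by auto
  ultimately show ?thesis by simp
qed

lemma rel_sym: "rel es i j = rel es j i"
  unfolding rel_def by auto

lemma dgl_dg:
  assumes "\<forall>i<k. \<forall>j<k. A i j = rel es i j" "i < k"
  shows "dgl es k i = dg A k i"
proof -
  have "{j. j < k \<and> rel es i j} = {j. j < k \<and> A i j}" using assms by auto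
  then show ?thesis unfolding dgl_def dg_def len_filter_card by simp
qed

lemma bdlist_bdc:
  assumes "\<forall>i<k. \<forall>j<k. A i j = rel es i j"
  shows "length (bdlist es k) = bdc A k"
proof -
  have "{i. i < k \<and> dgl es k i < 3} = {i. i < k \<and> dg A k i < 3}"
    using dgl_dg[OF assms] by auto
  then show ?thesis unfolding bdlist_def bdc_def len_filter_card by simp
qed

lemma emb_of_cert:
  assumes "\<forall>x\<in>set hv. fl ! x < k" "distinct (map (\<lambda>x. fl ! x) hv)"
    "\<forall>(a,b)\<in>set he. rel es (fl ! a) (fl ! b)"
    "\<forall>i<k. \<forall>j<k. A i j = rel es i j" "k \<le> m"
  shows "emb (set hv) (edges_of he) A m"
  unfolding emb_def
proof (intro exI[of _ "\<lambda>x. fl ! x"] conjI ballI impI)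
  show "inj_on (\<lambda>x. fl ! x) (set hv)" using assms(2) by (simp add: distinct_map)
  show "(\<lambda>x. fl ! x) ` set hv \<subseteq> {..<m}" using assms(1,5) by auto
  fix x y assume xy: "x \<in> set hv" "y \<in> set hv" "edges_of he x y"
  have "rel es (fl ! x) (fl ! y)"
    using xy(3) assms(3) rel_sym unfolding edges_of_def by blast
  then show "A (fl ! x) (fl ! y)" using assms(1,4) xy(1,2) by auto
qed

lemma fcert_HasF:
  assumes "fcert h fl es k" "\<forall>i<k. \<forall>j<k. A i j = rel es i j" "k \<le> m"
  shows "HasF A m"
proof -
  have h: "h < 5" using assms(1) unfolding fcert_def by simp
  obtain hv he where hh: "fgraphs ! h = (hv, he)" by force
  have c: "\<forall>x\<in>set hv. fl ! x < k" "distinct (map (\<lambda>x. fl ! x) hv)"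
    "\<forall>(a,b)\<in>set he. rel es (fl ! a) (fl ! b)"
    using assms(1) hh unfolding fcert_def by auto
  have e: "emb (set hv) (edges_of he) A m" by (rule emb_of_cert[OF c assms(2,3)])
  have "h = 0 \<or> h = 1 \<or> h = 2 \<or> h = 3 \<or> h = 4" using h by auto
  then show ?thesis
  proof (elim disjE)
    assume "h = 0" then show ?thesis using e hh[symmetric]
      by (simp add: HasF_def fgraphs_def triangle_V_def triangle_E_def)
  next
    assume "h = 1" then show ?thesis using e hh[symmetric]
      by (simp add: HasF_def fgraphs_def K23_V_def K23_E_def)
  next
    assume "h = 2" then show ?thesis using e hh[symmetric]
      by (simp add: HasF_def fgraphs_def domino_V_def domino_E_def)
  next
    assume "h = 3" then show ?thesis using e hh[symmetric]
      by (simp add: HasF_def fgraphs_def twinhouse_V_def twinhouse_E_def)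
  next
    assume "h = 4" then show ?thesis using e hh[symmetric]
      by (simp add: HasF_def fgraphs_def clawsquare_V_def clawsquare_E_def)
  qed
qed

lemma emb_transfer:
  assumes "emb HV HE (\<lambda>x y. A (t x) (t y)) m" "inj t" "\<forall>x<m. t x < m"
  shows "emb HV HE A m"
proof -
  obtain g where g: "inj_on g HV" "g ` HV \<subseteq> {..<m}" "\<forall>x\<in>HV. \<forall>y\<in>HV. HE x y \<longrightarrow> A (t (g x)) (t (g y))"
    using assms(1) unfolding emb_def by blast
  have a: "inj_on (t \<circ> g) HV" using g(1) assms(2) by (simp add: comp_inj_on inj_on_subset)
  have b: "(t \<circ> g) ` HV \<subseteq> {..<m}" using g(2) assms(3) by auto
  have c: "\<forall>x\<in>HV. \<forall>y\<in>HV. HE x y \<longrightarrow> A ((t \<circ> g) x) ((t \<circ> g) y)"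
    using g(3) by simp
  show ?thesis unfolding emb_def by (rule exI[of _ "t \<circ> g"], intro conjI a b c)
qed

lemma HasF_transfer:
  assumes "HasF (\<lambda>x y. A (t x) (t y)) m" "inj t" "\<forall>x<m. t x < m"
  shows "HasF A m"
  using assms(1) emb_transfer[OF _ assms(2,3)] unfolding HasF_def by blast

lemma card_perm_set:
  assumes "\<And>x. t (s x) = x" "\<And>x. s (t x) = x" "\<And>x. x < p \<Longrightarrow> s x < p" "\<And>x. x < p \<Longrightarrow> t x < p"
  shows "card {x. x < p \<and> P (t x)} = card {x. x < p \<and> P x}"
proof -
  have "{x. x < p \<and> P (t x)} = s ` {x. x < p \<and> P x}"
  proof
    show "{x. x < p \<and> P (t x)} \<subseteq> s ` {x. x < p \<and> P x}"
    proof
      fix x assume "x \<in> {x. x < p \<and> P (t x)}"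
      then have "t x \<in> {x. x < p \<and> P x}" "x = s (t x)" using assms by auto
      then show "x \<in> s ` {x. x < p \<and> P x}" by blast
    qed
    show "s ` {x. x < p \<and> P x} \<subseteq> {x. x < p \<and> P (t x)}" using assms by auto
  qed
  moreover have "inj s" by (metis assms(1) injI)
  ultimately show ?thesis by (simp add: card_image inj_on_subset)
qed

lemma iso_good:
  assumes g: "Good k (rel ke)" and ic: "isoc pi rho es ke k"
  shows "Good k (rel es)"
  unfolding Good_def
proof (intro allI impI)
  fix A m
  assume km: "k \<le> m" and co: "Conds A m" and bd: "\<forall>p. k \<le> p \<longrightarrow> p \<le> m \<longrightarrow> bdc A p \<le> 4"
    and ag: "\<forall>i<k. \<forall>j<k. A i j = rel es i j"
  define s where "s x = (if x < k then pi ! x else x)" for x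
  define t where "t x = (if x < k then rho ! x else x)" for x
  have icc: "\<forall>i<k. pi ! i < k \<and> rho ! i < k \<and> rho ! (pi ! i) = i \<and> pi ! (rho ! i) = i"
    "\<forall>i<k. \<forall>j<k. rel es i j = rel ke (pi ! i) (pi ! j)"
    using ic unfolding isoc_def list_all_iff by auto
  have ts: "t (s x) = x" for x
  proof (cases "x < k")
    case True
    then have "pi ! x < k" "rho ! (pi ! x) = x" using icc(1) by blast+
    then show ?thesis using True unfolding s_def t_def by simp
  qed (simp add: s_def t_def)
  have st: "s (t x) = x" for x
  proof (cases "x < k")
    case True
    then have "rho ! x < k" "pi ! (rho ! x) = x" using icc(1) by blast+
    then show ?thesis using True unfolding s_def t_def by simp
  qed (simp add: s_def t_def)
  have sp: "s x < p" if "x < p" "k \<le> p" for x p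
  proof (cases "x < k")
    case True
    then have "pi ! x < k" using icc(1) by blast
    then show ?thesis using True that unfolding s_def by simp
  qed (simp add: s_def that)
  have tp: "t x < p" if "x < p" "k \<le> p" for x p
  proof (cases "x < k")
    case True
    then have "rho ! x < k" using icc(1) by blast
    then show ?thesis using True that unfolding t_def by simp
  qed (simp add: t_def that)
  define A' where "A' x y = A (t x) (t y)" for x y
  have dgA': "dg A' p x = dg A p (t x)" if "k \<le> p" for p x
    unfolding dg_def A'_def
    by (rule card_perm_set[where s=s and t=t and P="\<lambda>j. A (t x) j"])
      (simp_all add: ts st sp[OF _ that] tp[OF _ that])
  have bdA': "bdc A' p = bdc A p" if "k \<le> p" for p
  proof -
    have "bdc A' p = card {x. x < p \<and> dg A p (t x) < 3}"
      unfolding bdc_def using dgA'[OF that] by simp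
    also have "\<dots> = bdc A p" unfolding bdc_def
      by (rule card_perm_set[where s=s and t=t and P="\<lambda>i. dg A p i < 3"])
        (simp_all add: ts st sp[OF _ that] tp[OF _ that])
    finally show ?thesis .
  qed
  have tm: "t x < m" if "x < m" for x using tp[OF that km] .
  have coA': "Conds A' m"
    unfolding Conds_def
  proof (intro conjI allI impI)
    show "A' i j = A' j i" if "i < m" "j < m" for i j
      using co tm that unfolding Conds_def A'_def by blast
    show "\<not> A' i i" if "i < m" for i
      using co tm that unfolding Conds_def A'_def by blast
    show "dg A' m i \<le> 3" if "i < m" for i
      using co tm that dgA'[OF km] unfolding Conds_def by simp
    show "dg A' m i = 3" if "m < 9" "i < m" for i
      using co tm that dgA'[OF km] unfolding Conds_def by simp
    show "1 \<le> m" using co unfolding Conds_def by simp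
  qed
  have bdA'': "\<forall>p. k \<le> p \<longrightarrow> p \<le> m \<longrightarrow> bdc A' p \<le> 4" using bd bdA' by auto
  have agA': "\<forall>i<k. \<forall>j<k. A' i j = rel ke i j"
  proof (intro allI impI)
    fix i j assume ij: "i < k" "j < k"
    have "A' i j = A (rho ! i) (rho ! j)" unfolding A'_def t_def using ij by simp
    also have "\<dots> = rel es (rho ! i) (rho ! j)" using ag icc(1) ij by auto
    also have "\<dots> = rel ke (pi ! (rho ! i)) (pi ! (rho ! j))" using icc ij by auto
    also have "\<dots> = rel ke i j" using icc(1) ij by auto
    finally show "A' i j = rel ke i j" .
  qed
  have "HasF A' m" using g km coA' bdA'' agA' unfolding Good_def by blast
  moreover have "inj t" by (metis st injI)
  ultimately show "HasF A m" using HasF_transfer[of A t m] tm unfolding A'_def by blast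
qed


lemma rel_append: "rel (es @ map (Pair k) s) i j \<longleftrightarrow> rel es i j \<or> (i = k \<and> j \<in> set s) \<or> (j = k \<and> i \<in> set s)"
  unfolding rel_def by auto

lemma check_sound:
  assumes cs: "check_state k es known cs" and kn: "list_all (\<lambda>(k',e'). Good k' (rel e')) known"
  shows "Good k (rel es)"
  unfolding Good_def
proof (intro allI impI)
  fix A m
  assume km: "k \<le> m" and co: "Conds A m" and bd: "\<forall>p. k \<le> p \<longrightarrow> p \<le> m \<longrightarrow> bdc A p \<le> 4"
    and ag: "\<forall>i<k. \<forall>j<k. A i j = rel es i j"
  have k9: "k < 9" and k0: "k = 0 \<or> bdlist es k \<noteq> []" and wf: "\<forall>(a,b)\<in>set es. a < k \<and> b < k"
    and la: "list_all2 (\<lambda>s c. check_child (Suc k) (es @ map (Pair k) s) known c) (cands es k) cs"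
    using cs unfolding check_state_def by auto
  have sym: "A i j = A j i" if "i < m" "j < m" for i j using co that unfolding Conds_def by blast
  have irr: "\<not> A i i" if "i < m" for i using co that unfolding Conds_def by blast
  have d3: "dg A m i \<le> 3" if "i < m" for i using co that unfolding Conds_def by blast
  have kltm: "k < m"
  proof (rule ccontr)
    assume "\<not> k < m"
    then have "k = m" using km by simp
    then have all3: "\<forall>i<m. dg A m i = 3" "1 \<le> m" using co k9 unfolding Conds_def by auto
    then have "bdlist es k \<noteq> []" using k0 \<open>k = m\<close> by auto
    then obtain i where "i \<in> set (bdlist es k)" by (cases "bdlist es k") auto
    then have i: "i < k" "dgl es k i < 3" unfolding bdlist_def by auto
    then have "dg A k i < 3" using dgl_dg[OF ag] by simp
    then show False using all3 i \<open>k = m\<close> by simp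
  qed
  define T where "T = {j. j < k \<and> A k j}"
  have Tb: "T \<subseteq> set (bdlist es k)"
  proof
    fix j assume "j \<in> T"
    then have j: "j < k" "A k j" unfolding T_def by auto
    have sub: "{j'. j' < k \<and> A j j'} \<subset> {j'. j' < m \<and> A j j'}"
    proof
      show "{j'. j' < k \<and> A j j'} \<subseteq> {j'. j' < m \<and> A j j'}" using kltm by auto
      have "A j k" using sym[of k j] j kltm by simp
      then have "k \<in> {j'. j' < m \<and> A j j'}" using kltm by simp
      then show "{j'. j' < k \<and> A j j'} \<noteq> {j'. j' < m \<and> A j j'}" by auto
    qed
    have "dg A k j < dg A m j" unfolding dg_def by (rule psubset_card_mono[OF _ sub]) simp
    then have "dg A k j < 3" using d3[of j] j kltm by simp
    then have "dgl es k j < 3" using dgl_dg[OF ag j(1)] by simp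
    then show "j \<in> set (bdlist es k)" using j unfolding bdlist_def by simp
  qed
  have Tc: "card T \<le> 3"
  proof -
    have "T \<subseteq> {j. j < m \<and> A k j}" unfolding T_def using kltm by auto
    then have "card T \<le> dg A m k" unfolding dg_def by (rule card_mono[rotated]) simp
    then show ?thesis using d3[OF kltm] by simp
  qed
  obtain s where s: "s \<in> set (subseqs (bdlist es k))" "set s = T"
    using subset_subseqs[OF Tb] by blast
  have "distinct (bdlist es k)" unfolding bdlist_def by simp
  then have "distinct s" using subseqs_distinctD[OF s(1)] by simp
  then have "length s \<le> 3" using Tc s(2) distinct_card by fastforce
  then have "s \<in> set (cands es k)" using s(1) unfolding cands_def by simp
  then obtain idx where idx: "idx < length (cands es k)" "cands es k ! idx = s"
    by (metis in_set_conv_nth)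
  have lcs: "length cs = length (cands es k)" using la by (simp add: list_all2_lengthD)
  define es' where "es' = es @ map (Pair k) s"
  have cc: "check_child (Suc k) es' known (cs ! idx)"
    using la idx unfolding es'_def by (metis list_all2_nthD)
  have sT: "x < k" if "x \<in> set s" for x using that s(2) unfolding T_def by auto
  have ag': "\<forall>i<Suc k. \<forall>j<Suc k. A i j = rel es' i j"
  proof (intro allI impI)
    fix i j assume ij: "i < Suc k" "j < Suc k"
    have nk: "\<not> rel es k x" "\<not> rel es x k" for x using wf unfolding rel_def by auto
    show "A i j = rel es' i j"
    proof (cases "i < k")
      case True note i = this
      show ?thesis
      proof (cases "j < k")
        case True then show ?thesis using i ag unfolding es'_def rel_append by auto
      next
        case False then have "j = k" using ij by simp
        then show ?thesis using i sym[of i k] kltm nk s(2) unfolding es'_def rel_append T_def by auto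
      qed
    next
      case False then have ik: "i = k" using ij by simp
      show ?thesis
      proof (cases "j < k")
        case True then show ?thesis using ik nk s(2) unfolding es'_def rel_append T_def by auto
      next
        case False then have "j = k" using ij by simp
        then show ?thesis using ik irr[OF kltm] nk sT unfolding es'_def rel_append by auto
      qed
    qed
  qed
  have skm: "Suc k \<le> m" using kltm by simp
  show "HasF A m"
  proof (cases "cs ! idx")
    case Bd
    then have "5 \<le> length (bdlist es' (Suc k))" using cc by simp
    then have "5 \<le> bdc A (Suc k)" using bdlist_bdc[OF ag'] by simp
    moreover have "bdc A (Suc k) \<le> 4" using bd skm by simp
    ultimately show ?thesis by simp
  next
    case (Fb h fl)
    then show ?thesis using cc fcert_HasF[OF _ ag' skm] by simp
  next
    case (Rf i pi rho)
    then have r: "i < length known" "fst (known ! i) = Suc k" "isoc pi rho es' (snd (known ! i)) (Suc k)"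
      using cc by auto
    have "Good (fst (known ! i)) (rel (snd (known ! i)))"
      using kn r(1) by (cases "known ! i") (auto simp: list_all_length)
    then have "Good (Suc k) (rel es')" using iso_good r by simp
    then show ?thesis unfolding Good_def using skm co bd ag' by auto
  qed
qed

lemma g8: "Good 8 (rel [(1,0),(2,0),(3,0),(4,1),(4,2),(5,1),(6,2),(7,4)])"
  apply (rule check_sound[where known="[]" and cs="[(Fb 4 [0, 1, 0, 2, 4, 5, 3, 6, 8]), (Fb 4 [0, 0, 1, 4, 2, 3, 5, 7, 8]), (Bd), (Fb 4 [0, 0, 2, 4, 1, 3, 6, 7, 8]), (Bd), (Bd), (Bd), (Fb 4 [0, 1, 4, 2, 0, 5, 7, 6, 8]), (Bd), (Bd), (Bd), (Bd), (Bd), (Bd), (Bd)]"])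
  apply code_simp
  apply (simp)
  done

lemma g7: "Good 7 (rel [(1,0),(2,0),(3,0),(4,1),(4,2),(5,1),(6,2)])"
  apply (rule check_sound[where known="[(8, [(1,0),(2,0),(3,0),(4,1),(4,2),(5,1),(6,2),(7,4)])]" and cs="[(Fb 2 [0, 0, 1, 5, 2, 4, 7]), (Fb 2 [0, 0, 2, 6, 1, 4, 7]), (Fb 3 [0, 3, 7, 1, 2, 0, 4]), (Fb 4 [0, 1, 0, 2, 4, 5, 3, 6, 7]), (Bd), (Bd), (Bd), (Fb 2 [0, 0, 1, 5, 2, 4, 7]), (Fb 2 [0, 0, 1, 5, 2, 4, 7]), (Fb 2 [0, 0, 2, 6, 1, 4, 7]), (Rf 0 [0, 1, 2, 3, 4, 5, 6, 7] [0, 1, 2, 3, 4, 5, 6, 7]), (Bd), (Bd), (Bd), (Bd)]"])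
  apply code_simp
  using g8 apply simp
  done

lemma g6: "Good 6 (rel [(1,0),(2,0),(3,0),(4,1),(4,2),(5,1)])"
  apply (rule check_sound[where known="[(7, [(1,0),(2,0),(3,0),(4,1),(4,2),(5,1),(6,2)])]" and cs="[(Fb 0 [2, 4, 6]), (Fb 2 [0, 1, 0, 3, 4, 2, 6]), (Fb 2 [0, 1, 0, 3, 4, 2, 6]), (Fb 0 [2, 4, 6]), (Fb 0 [2, 4, 6]), (Fb 3 [0, 5, 6, 0, 4, 1, 2]), (Rf 0 [0, 1, 2, 3, 4, 5, 6] [0, 1, 2, 3, 4, 5, 6]), (Fb 2 [0, 0, 1, 5, 2, 4, 6]), (Fb 3 [0, 3, 6, 1, 2, 0, 4]), (Bd), (Bd), (Fb 2 [0, 0, 1, 5, 2, 4, 6]), (Rf 0 [1, 0, 4, 5, 2, 3, 6] [1, 0, 4, 5, 2, 3, 6]), (Bd), (Bd)]"])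
  apply code_simp
  using g7 apply simp
  done

lemma g9: "Good 6 (rel [(1,0),(2,0),(3,0),(4,1),(4,2),(5,4)])"
  apply (rule check_sound[where known="[(7, [(1,0),(2,0),(3,0),(4,1),(4,2),(5,1),(6,2)])]" and cs="[(Fb 1 [0, 6, 1, 2, 3]), (Fb 1 [1, 2, 0, 4, 6]), (Fb 1 [1, 2, 0, 4, 6]), (Fb 2 [0, 0, 1, 4, 3, 6, 5]), (Fb 2 [0, 2, 0, 3, 4, 1, 6]), (Fb 2 [0, 0, 1, 6, 2, 4, 5]), (Rf 0 [1, 0, 4, 5, 2, 6, 3] [1, 0, 4, 6, 2, 3, 5]), (Fb 2 [0, 0, 2, 4, 3, 6, 5]), (Fb 2 [0, 1, 0, 3, 4, 2, 6]), (Fb 2 [0, 0, 2, 6, 1, 4, 5]), (Rf 0 [1, 4, 0, 5, 2, 6, 3] [2, 0, 4, 6, 1, 3, 5]), (Bd), (Bd), (Bd), (Bd)]"])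
  apply code_simp
  using g7 apply simp
  done

lemma g11: "Good 6 (rel [(1,0),(2,0),(3,0),(4,1),(5,1)])"
  apply (rule check_sound[where known="[]" and cs="[(Fb 3 [0, 1, 4, 2, 3, 0, 6]), (Fb 3 [0, 1, 5, 2, 3, 0, 6]), (Bd), (Fb 3 [0, 0, 2, 4, 5, 1, 6]), (Bd), (Bd), (Bd), (Fb 3 [0, 0, 3, 4, 5, 1, 6]), (Bd), (Bd), (Bd), (Bd), (Bd), (Bd), (Bd)]"])
  apply code_simp
  apply (simp)
  done

lemma g5: "Good 5 (rel [(1,0),(2,0),(3,0),(4,1),(4,2)])"
  apply (rule check_sound[where known="[(6, [(1,0),(2,0),(3,0),(4,1),(4,2),(5,1)]),(6, [(1,0),(2,0),(3,0),(4,1),(4,2),(5,4)])]" and cs="[(Fb 1 [0, 5, 1, 2, 3]), (Fb 0 [1, 4, 5]), (Fb 1 [1, 2, 0, 4, 5]), (Fb 0 [1, 4, 5]), (Fb 2 [0, 2, 0, 3, 4, 1, 5]), (Fb 0 [1, 4, 5]), (Rf 0 [0, 1, 2, 3, 4, 5] [0, 1, 2, 3, 4, 5]), (Fb 0 [2, 4, 5]), (Fb 2 [0, 1, 0, 3, 4, 2, 5]), (Fb 0 [2, 4, 5]), (Rf 0 [0, 2, 1, 3, 4, 5] [0, 2, 1, 3, 4, 5]), (Fb 3 [0, 3, 5, 1, 2, 0, 4]), (Bd), (Rf 1 [0, 1, 2, 3, 4, 5] [0, 1, 2, 3, 4, 5]), (Bd)]"])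
  apply code_simp
  using g6 g9 apply simp
  done

lemma g10: "Good 5 (rel [(1,0),(2,0),(3,0),(4,1)])"
  apply (rule check_sound[where known="[(6, [(1,0),(2,0),(3,0),(4,1),(4,2),(5,1)]),(6, [(1,0),(2,0),(3,0),(4,1),(5,1)])]" and cs="[(Fb 1 [0, 5, 1, 2, 3]), (Fb 0 [1, 4, 5]), (Rf 0 [0, 1, 2, 3, 5, 4] [0, 1, 2, 3, 5, 4]), (Fb 0 [1, 4, 5]), (Rf 0 [0, 1, 3, 2, 5, 4] [0, 1, 3, 2, 5, 4]), (Fb 0 [1, 4, 5]), (Rf 1 [0, 1, 2, 3, 4, 5] [0, 1, 2, 3, 4, 5]), (Fb 3 [0, 1, 4, 2, 3, 0, 5]), (Bd), (Bd), (Bd), (Bd), (Bd), (Bd), (Bd)]"])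
  apply code_simp
  using g6 g11 apply simp
  done

lemma g12: "Good 5 (rel [(1,0),(2,0),(3,0)])"
  apply (rule check_sound[where known="[(6, [(1,0),(2,0),(3,0),(4,1),(4,2),(5,4)])]" and cs="[(Fb 1 [0, 5, 1, 2, 3]), (Rf 0 [0, 1, 2, 3, 5, 4] [0, 1, 2, 3, 5, 4]), (Bd), (Rf 0 [0, 1, 3, 2, 5, 4] [0, 1, 3, 2, 5, 4]), (Bd), (Bd), (Bd), (Rf 0 [0, 3, 1, 2, 5, 4] [0, 2, 3, 1, 5, 4]), (Bd), (Bd), (Bd), (Bd), (Bd), (Bd), (Bd)]"])
  apply code_simp
  using g9 apply simp
  done

lemma g4: "Good 4 (rel [(1,0),(2,0),(3,0)])"
  apply (rule check_sound[where known="[(5, [(1,0),(2,0),(3,0),(4,1),(4,2)]),(5, [(1,0),(2,0),(3,0),(4,1)]),(5, [(1,0),(2,0),(3,0)])]" and cs="[(Fb 1 [0, 4, 1, 2, 3]), (Rf 0 [0, 1, 2, 3, 4] [0, 1, 2, 3, 4]), (Rf 0 [0, 1, 3, 2, 4] [0, 1, 3, 2, 4]), (Rf 1 [0, 1, 2, 3, 4] [0, 1, 2, 3, 4]), (Rf 0 [0, 3, 1, 2, 4] [0, 2, 3, 1, 4]), (Rf 1 [0, 2, 1, 3, 4] [0, 2, 1, 3, 4]), (Rf 1 [0, 2, 3, 1, 4] [0, 3, 1, 2, 4]), (Rf 2 [0, 1, 2, 3, 4] [0, 1, 2, 3, 4])]"])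
  apply code_simp
  using g5 g10 g12 apply simp
  done

lemma g13: "Good 4 (rel [(1,0),(2,0),(3,1),(3,2)])"
  apply (rule check_sound[where known="[(5, [(1,0),(2,0),(3,0),(4,1),(4,2)])]" and cs="[(Fb 0 [0, 1, 4]), (Fb 0 [0, 1, 4]), (Fb 0 [0, 1, 4]), (Fb 0 [0, 2, 4]), (Fb 0 [0, 2, 4]), (Fb 1 [0, 3, 1, 2, 4]), (Rf 0 [0, 1, 2, 4, 3] [0, 1, 2, 4, 3]), (Fb 0 [1, 3, 4]), (Fb 1 [1, 2, 0, 3, 4]), (Fb 0 [1, 3, 4]), (Rf 0 [1, 0, 4, 2, 3] [1, 0, 3, 4, 2]), (Fb 0 [2, 3, 4]), (Rf 0 [1, 4, 0, 2, 3] [2, 0, 3, 4, 1]), (Rf 0 [4, 1, 2, 0, 3] [3, 1, 2, 4, 0]), (Bd)]"])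
  apply code_simp
  using g5 apply simp
  done

lemma g14: "Good 4 (rel [(1,0),(2,0),(3,1)])"
  apply (rule check_sound[where known="[(5, [(1,0),(2,0),(3,0),(4,1),(4,2)]),(5, [(1,0),(2,0),(3,0),(4,1)])]" and cs="[(Fb 0 [0, 1, 4]), (Fb 0 [0, 1, 4]), (Fb 0 [0, 1, 4]), (Fb 0 [0, 2, 4]), (Fb 0 [0, 2, 4]), (Rf 0 [0, 1, 3, 4, 2] [0, 1, 4, 2, 3]), (Rf 1 [0, 1, 2, 4, 3] [0, 1, 2, 4, 3]), (Fb 0 [1, 3, 4]), (Rf 0 [1, 0, 4, 3, 2] [1, 0, 4, 3, 2]), (Fb 0 [1, 3, 4]), (Rf 1 [1, 0, 4, 2, 3] [1, 0, 3, 4, 2]), (Bd), (Bd), (Bd), (Bd)]"])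
  apply code_simp
  using g5 g10 apply simp
  done

lemma g15: "Good 4 (rel [(1,0),(2,0)])"
  apply (rule check_sound[where known="[(5, [(1,0),(2,0),(3,0),(4,1)]),(5, [(1,0),(2,0),(3,0)]),(5, [(1,0),(2,0),(3,0),(4,1),(4,2)])]" and cs="[(Fb 0 [0, 1, 4]), (Fb 0 [0, 1, 4]), (Fb 0 [0, 1, 4]), (Fb 0 [0, 2, 4]), (Fb 0 [0, 2, 4]), (Rf 0 [0, 2, 3, 4, 1] [0, 4, 1, 2, 3]), (Rf 1 [0, 1, 2, 4, 3] [0, 1, 2, 4, 3]), (Rf 2 [4, 1, 2, 3, 0] [4, 1, 2, 3, 0]), (Bd), (Bd), (Bd), (Bd), (Bd), (Bd), (Bd)]"])
  apply code_simp
  using g10 g12 g5 apply simp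
  done

lemma g17: "Good 4 (rel [(1,0),(3,2)])"
  apply (rule check_sound[where known="[]" and cs="[(Fb 0 [0, 1, 4]), (Fb 0 [0, 1, 4]), (Bd), (Fb 0 [2, 3, 4]), (Bd), (Bd), (Bd), (Fb 0 [2, 3, 4]), (Bd), (Bd), (Bd), (Bd), (Bd), (Bd), (Bd)]"])
  apply code_simp
  apply (simp)
  done

lemma g18: "Good 4 (rel [(1,0)])"
  apply (rule check_sound[where known="[(5, [(1,0),(2,0),(3,0),(4,1)])]" and cs="[(Fb 0 [0, 1, 4]), (Fb 0 [0, 1, 4]), (Bd), (Rf 0 [1, 4, 2, 3, 0] [4, 0, 2, 3, 1]), (Bd), (Bd), (Bd), (Rf 0 [4, 1, 2, 3, 0] [4, 1, 2, 3, 0]), (Bd), (Bd), (Bd), (Bd), (Bd), (Bd), (Bd)]"])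
  apply code_simp
  using g10 apply simp
  done

lemma g21: "Good 4 (rel [])"
  apply (rule check_sound[where known="[(5, [(1,0),(2,0),(3,0)])]" and cs="[(Rf 0 [1, 2, 3, 4, 0] [4, 0, 1, 2, 3]), (Rf 0 [1, 2, 4, 3, 0] [4, 0, 1, 3, 2]), (Bd), (Rf 0 [1, 4, 2, 3, 0] [4, 0, 2, 3, 1]), (Bd), (Bd), (Bd), (Rf 0 [4, 1, 2, 3, 0] [4, 1, 2, 3, 0]), (Bd), (Bd), (Bd), (Bd), (Bd), (Bd), (Bd)]"])
  apply code_simp
  using g12 apply simp
  done

lemma g3: "Good 3 (rel [(1,0),(2,0)])"
  apply (rule check_sound[where known="[(4, [(1,0),(2,0),(3,0)]),(4, [(1,0),(2,0),(3,1),(3,2)]),(4, [(1,0),(2,0),(3,1)]),(4, [(1,0),(2,0)])]" and cs="[(Fb 0 [0, 1, 3]), (Fb 0 [0, 1, 3]), (Fb 0 [0, 2, 3]), (Rf 0 [0, 1, 2, 3] [0, 1, 2, 3]), (Rf 1 [0, 1, 2, 3] [0, 1, 2, 3]), (Rf 2 [0, 1, 2, 3] [0, 1, 2, 3]), (Rf 2 [0, 2, 1, 3] [0, 2, 1, 3]), (Rf 3 [0, 1, 2, 3] [0, 1, 2, 3])]"])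
  apply code_simp
  using g4 g13 g14 g15 apply simp
  done

lemma g16: "Good 3 (rel [(1,0)])"
  apply (rule check_sound[where known="[(4, [(1,0),(2,0),(3,1)]),(4, [(1,0),(2,0)]),(4, [(1,0),(3,2)]),(4, [(1,0)])]" and cs="[(Fb 0 [0, 1, 3]), (Fb 0 [0, 1, 3]), (Rf 0 [0, 2, 3, 1] [0, 3, 1, 2]), (Rf 1 [0, 1, 3, 2] [0, 1, 3, 2]), (Rf 0 [2, 0, 3, 1] [1, 3, 0, 2]), (Rf 1 [1, 0, 3, 2] [1, 0, 3, 2]), (Rf 2 [0, 1, 2, 3] [0, 1, 2, 3]), (Rf 3 [0, 1, 2, 3] [0, 1, 2, 3])]"])
  apply code_simp
  using g14 g15 g17 g18 apply simp
  done

lemma g20: "Good 3 (rel [])"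
  apply (rule check_sound[where known="[(4, [(1,0),(2,0),(3,0)]),(4, [(1,0),(2,0)]),(4, [(1,0)]),(4, [])]" and cs="[(Rf 0 [1, 2, 3, 0] [3, 0, 1, 2]), (Rf 1 [1, 2, 3, 0] [3, 0, 1, 2]), (Rf 1 [1, 3, 2, 0] [3, 0, 2, 1]), (Rf 2 [0, 2, 3, 1] [0, 3, 1, 2]), (Rf 1 [3, 1, 2, 0] [3, 1, 2, 0]), (Rf 2 [2, 0, 3, 1] [1, 3, 0, 2]), (Rf 2 [2, 3, 0, 1] [2, 3, 0, 1]), (Rf 3 [0, 1, 2, 3] [0, 1, 2, 3])]"])
  apply code_simp
  using g4 g15 g18 g21 apply simp
  done

lemma g2: "Good 2 (rel [(1,0)])"
  apply (rule check_sound[where known="[(3, [(1,0),(2,0)]),(3, [(1,0)])]" and cs="[(Fb 0 [0, 1, 2]), (Rf 0 [0, 1, 2] [0, 1, 2]), (Rf 0 [1, 0, 2] [1, 0, 2]), (Rf 1 [0, 1, 2] [0, 1, 2])]"])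
  apply code_simp
  using g3 g16 apply simp
  done

lemma g19: "Good 2 (rel [])"
  apply (rule check_sound[where known="[(3, [(1,0),(2,0)]),(3, [(1,0)]),(3, [])]" and cs="[(Rf 0 [1, 2, 0] [2, 0, 1]), (Rf 1 [0, 2, 1] [0, 2, 1]), (Rf 1 [2, 0, 1] [1, 2, 0]), (Rf 2 [0, 1, 2] [0, 1, 2])]"])
  apply code_simp
  using g3 g16 g20 apply simp
  done

lemma g1: "Good 1 (rel [])"
  apply (rule check_sound[where known="[(2, [(1,0)]),(2, [])]" and cs="[(Rf 0 [0, 1] [0, 1]), (Rf 1 [0, 1] [0, 1])]"])
  apply code_simp
  using g2 g19 apply simp
  done

lemma g0: "Good 0 (rel [])"
  apply (rule check_sound[where known="[(1, [])]" and cs="[(Rf 0 [0] [0])]"])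
  apply code_simp
  using g1 apply simp
  done



lemma pd_exists:
  assumes sg: "simple_graph V E" and pw: "pathwidth V E \<le> 4"
  shows "\<exists>B. path_decomposition V E B \<and> (\<forall>X\<in>set B. card X \<le> 5)"
proof -
  have "path_decomposition V E [V]"
    using sg unfolding path_decomposition_def simple_graph_def by auto
  then have ex: "\<exists>B. path_decomposition V E B \<and> (\<forall>X\<in>set B. card X \<le> card V + 1)" by auto
  have "\<exists>B. path_decomposition V E B \<and> (\<forall>X\<in>set B. card X \<le> pathwidth V E + 1)"
    unfolding pathwidth_def by (rule LeastI_ex) (use ex in blast)
  then show ?thesis using pw by fastforce
qed

definition fb :: "'a set list \<Rightarrow> 'a \<Rightarrow> nat" where
  "fb B v = (LEAST i. i < length B \<and> v \<in> B ! i)"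

lemma fb_props:
  assumes "\<exists>X\<in>set B. v \<in> X"
  shows "fb B v < length B" "v \<in> B ! fb B v" "\<And>i. i < length B \<Longrightarrow> v \<in> B ! i \<Longrightarrow> fb B v \<le> i"
proof -
  obtain i where i: "i < length B" "v \<in> B ! i" using assms by (metis in_set_conv_nth)
  have "fb B v < length B \<and> v \<in> B ! fb B v" unfolding fb_def by (rule LeastI[of _ i]) (use i in simp)
  then show "fb B v < length B" "v \<in> B ! fb B v" by auto
  show "\<And>i. i < length B \<Longrightarrow> v \<in> B ! i \<Longrightarrow> fb B v \<le> i" unfolding fb_def by (simp add: Least_le)
qed

lemma sep_bound:
  assumes sg: "simple_graph V E" and pd: "path_decomposition V E B" and bg: "\<forall>X\<in>set B. card X \<le> 5"
    and xs: "set xs = V" "distinct xs" "sorted (map (fb B) xs)" and p: "p < length xs"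
  shows "card {i. i < p \<and> (\<exists>j. p \<le> j \<and> j < length xs \<and> E (xs ! i) (xs ! j))} \<le> 4"
proof -
  define D where "D = {i. i < p \<and> (\<exists>j. p \<le> j \<and> j < length xs \<and> E (xs ! i) (xs ! j))}"
  define z where "z = xs ! p"
  define j0 where "j0 = fb B z"
  have fin: "finite V" using sg unfolding simple_graph_def by simp
  have cov: "\<exists>X\<in>set B. v \<in> X" if "v \<in> V" for v using pd that unfolding path_decomposition_def by blast
  have zV: "z \<in> V" unfolding z_def using xs(1) p by auto
  have j0: "j0 < length B" "z \<in> B ! j0" using fb_props[OF cov[OF zV]] unfolding j0_def by auto
  have sub: "(\<lambda>i. xs ! i) ` D \<subseteq> B ! j0 - {z}"
  proof
    fix x assume "x \<in> (\<lambda>i. xs ! i) ` D"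
    then obtain i j where ij: "x = xs ! i" "i < p" "p \<le> j" "j < length xs" "E (xs ! i) (xs ! j)"
      unfolding D_def by blast
    define y where "y = xs ! j"
    have xV: "x \<in> V" using ij xs(1) p by auto
    have yV: "y \<in> V" unfolding y_def using ij xs(1) by auto
    obtain X where X: "X \<in> set B" "x \<in> X" "y \<in> X" using pd ij unfolding path_decomposition_def y_def by blast
    obtain k where k: "k < length B" "B ! k = X" using X(1) by (metis in_set_conv_nth)
    have fyk: "fb B y \<le> k" using fb_props(3)[OF cov[OF yV] k(1)] X k by simp
    have s1: "fb B x \<le> fb B z"
      using sorted_nth_mono[OF xs(3), of i p] ij p unfolding z_def by simp
    have s2: "fb B z \<le> fb B y"
      using sorted_nth_mono[OF xs(3), of p j] ij p unfolding z_def y_def by simp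
    have "x \<in> B ! fb B x" using fb_props(2)[OF cov[OF xV]] .
    moreover have "x \<in> B ! k" using X k by simp
    moreover have "fb B x \<le> j0" "j0 \<le> k" using s1 s2 fyk unfolding j0_def by auto
    ultimately have "x \<in> B ! j0" using pd k(1) unfolding path_decomposition_def by blast
    moreover have "x \<noteq> z" unfolding z_def ij(1) using xs(2) ij p by (simp add: nth_eq_iff_index_eq)
    ultimately show "x \<in> B ! j0 - {z}" by simp
  qed
  have inj: "inj_on (\<lambda>i. xs ! i) D" by (rule inj_on_nth[OF xs(2)]) (use p in \<open>auto simp: D_def\<close>)
  have finB: "finite (B ! j0)" using pd j0 fin unfolding path_decomposition_def
    by (meson finite_subset nth_mem)
  have "card D = card ((\<lambda>i. xs ! i) ` D)" using inj by (simp add: card_image)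
  also have "\<dots> \<le> card (B ! j0 - {z})" by (rule card_mono) (use finB sub in auto)
  also have "\<dots> = card (B ! j0) - 1" using j0(2) by (simp add: card_Diff_singleton)
  also have "\<dots> \<le> 4"
  proof -
    have "card (B ! j0) \<le> 5" using bg j0(1) by simp
    then show ?thesis by simp
  qed
  finally show ?thesis unfolding D_def .
qed


lemma emb_iso:
  assumes "emb HV HE (\<lambda>i j. E (xs ! i) (xs ! j)) m" "m \<le> length xs" "distinct xs" "set xs = V"
  shows "has_subgraph_iso V E HV HE"
proof -
  obtain g where g: "inj_on g HV" "g ` HV \<subseteq> {..<m}" "\<forall>x\<in>HV. \<forall>y\<in>HV. HE x y \<longrightarrow> E (xs ! g x) (xs ! g y)"
    using assms(1) unfolding emb_def by blast
  have i2: "inj_on (\<lambda>i. xs ! i) (g ` HV)" by (rule inj_on_nth[OF assms(3)]) (use g(2) assms(2) in auto)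
  have a: "inj_on ((\<lambda>i. xs ! i) \<circ> g) HV" using comp_inj_on[OF g(1) i2] .
  have b: "((\<lambda>i. xs ! i) \<circ> g) ` HV \<subseteq> V" using g(2) assms(2,4) by auto
  have c: "\<forall>x\<in>HV. \<forall>y\<in>HV. HE x y \<longrightarrow> E (((\<lambda>i. xs ! i) \<circ> g) x) (((\<lambda>i. xs ! i) \<circ> g) y)"
    using g(3) by simp
  show ?thesis unfolding has_subgraph_iso_def by (rule exI[of _ "(\<lambda>i. xs ! i) \<circ> g"], intro conjI a b c)
qed

theorem lemma29:
  fixes V :: "'a set" and E :: "'a \<Rightarrow> 'a \<Rightarrow> bool"
  assumes "simple_graph V E" and "V \<noteq> {}" and "cubic V E"
    and "pathwidth V E \<le> 4"
  shows "has_subgraph_iso V E triangle_V triangle_E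
       \<or> has_subgraph_iso V E K23_V K23_E
       \<or> has_subgraph_iso V E domino_V domino_E
       \<or> has_subgraph_iso V E twinhouse_V twinhouse_E
       \<or> has_subgraph_iso V E clawsquare_V clawsquare_E"
proof -
  have sg: "simple_graph V E" by fact
  have fin: "finite V" and Ein: "\<And>u v. E u v \<Longrightarrow> u \<in> V \<and> v \<in> V"
    and Esym: "\<And>u v. E u v \<Longrightarrow> E v u" and Eirr: "\<And>u. \<not> E u u"
    using sg unfolding simple_graph_def by auto
  obtain B where pd: "path_decomposition V E B" and bg: "\<forall>X\<in>set B. card X \<le> 5"
    using pd_exists[OF sg assms(4)] by blast
  obtain ys where ys: "set ys = V" "distinct ys" using finite_distinct_list[OF fin] by blast
  define xs where "xs = sort_key (fb B) ys"
  have xs: "set xs = V" "distinct xs" "sorted (map (fb B) xs)" unfolding xs_def using ys by auto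
  define n where "n = length xs"
  define A where "A i j = E (xs ! i) (xs ! j)" for i j
  define m where "m = min n 9"
  have n1: "1 \<le> n" using assms(2) xs(1) unfolding n_def by (cases xs) auto
  have mn: "m \<le> n" unfolding m_def by simp
  define N where "N i = {j. j < n \<and> A i j}" for i
  have cardN: "card (N i) = 3" if "i < n" for i
  proof -
    have inj: "inj_on (\<lambda>j. xs ! j) (N i)" by (rule inj_on_nth[OF xs(2)]) (auto simp: N_def n_def)
    have "(\<lambda>j. xs ! j) ` N i = {u \<in> V. E (xs ! i) u}"
    proof
      show "(\<lambda>j. xs ! j) ` N i \<subseteq> {u \<in> V. E (xs ! i) u}" using xs(1) unfolding N_def A_def n_def by auto
      show "{u \<in> V. E (xs ! i) u} \<subseteq> (\<lambda>j. xs ! j) ` N i"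
      proof
        fix u assume "u \<in> {u \<in> V. E (xs ! i) u}"
        then have u: "u \<in> set xs" "E (xs ! i) u" using xs(1) by auto
        then obtain j where "j < length xs" "xs ! j = u" by (metis in_set_conv_nth)
        then show "u \<in> (\<lambda>j. xs ! j) ` N i" using u unfolding N_def A_def n_def by auto
      qed
    qed
    moreover have "xs ! i \<in> V" using xs(1) that unfolding n_def by auto
    ultimately show ?thesis using assms(3) inj unfolding cubic_def by (metis card_image)
  qed
  have dgle: "dg A p i \<le> 3" if "p \<le> n" "i < n" for p i
  proof -
    have "{j. j < p \<and> A i j} \<subseteq> N i" unfolding N_def using that by auto
    then have "dg A p i \<le> card (N i)" unfolding dg_def by (rule card_mono[rotated]) (simp add: N_def)
    then show ?thesis using cardN[OF that(2)] by simp
  qed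
  have dgn: "dg A n i = 3" if "i < n" for i
    using cardN[OF that] unfolding dg_def N_def by simp
  have co: "Conds A m"
    unfolding Conds_def
  proof (intro conjI allI impI)
    show "A i j = A j i" for i j unfolding A_def using Esym by blast
    show "\<not> A i i" for i unfolding A_def using Eirr by blast
    show "dg A m i \<le> 3" if "i < m" for i using dgle mn that by simp
    show "dg A m i = 3" if "m < 9" "i < m" for i
    proof -
      have "m = n" using that(1) unfolding m_def by simp
      then show ?thesis using dgn that(2) by simp
    qed
    show "1 \<le> m" using n1 unfolding m_def by simp
  qed
  have bd: "bdc A p \<le> 4" if "p \<le> m" for p
  proof (cases "p < n")
    case True
    have "{i. i < p \<and> dg A p i < 3} \<subseteq> {i. i < p \<and> (\<exists>j. p \<le> j \<and> j < length xs \<and> E (xs ! i) (xs ! j))}"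
    proof
      fix i assume i: "i \<in> {i. i < p \<and> dg A p i < 3}"
      show "i \<in> {i. i < p \<and> (\<exists>j. p \<le> j \<and> j < length xs \<and> E (xs ! i) (xs ! j))}"
      proof (rule ccontr)
        assume "i \<notin> {i. i < p \<and> (\<exists>j. p \<le> j \<and> j < length xs \<and> E (xs ! i) (xs ! j))}"
        then have "N i \<subseteq> {j. j < p \<and> A i j}" using i unfolding N_def A_def n_def by auto
        then have "card (N i) \<le> dg A p i" unfolding dg_def by (rule card_mono[rotated]) simp
        then show False using cardN[of i] i True by simp
      qed
    qed
    then have "bdc A p \<le> card {i. i < p \<and> (\<exists>j. p \<le> j \<and> j < length xs \<and> E (xs ! i) (xs ! j))}"
      unfolding bdc_def by (rule card_mono[rotated]) simp
    also have "\<dots> \<le> 4" using sep_bound[OF sg pd bg xs] True unfolding n_def by simp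
    finally show ?thesis .
  next
    case False
    then have "p = n" using that mn by simp
    then have "{i. i < p \<and> dg A p i < 3} = {}" using dgn by auto
    then show ?thesis unfolding bdc_def by (simp only: card.empty)
  qed
  have "HasF A m" using g0 co bd unfolding Good_def by auto
  then show ?thesis unfolding HasF_def A_def
    using emb_iso[OF _ _ xs(2) xs(1)] mn unfolding n_def by blast
qed

end
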